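(* Let $U\subseteq\mathbb R^{d}$ and $V\subseteq\mathbb R$ be open. Let $f_1,\dots,f_n:U\to V$ be real-analytic functions each of $(\tau_1,\tau_2)$-type, and let $g:V^n\to\mathbb R$ be real-analytic of $(\sigma_1,\sigma_2)$-type. Writing $f=(f_1,\dots,f_n)$, the composition $h=g\circ f$ is real-analytic of $\big(\min(\tau_1,(\sigma_1\circ f)\cdot\tau_1/\tau_2),\ \sigma_2\circ f\big)$-type.
   Context: Let $U\subseteq\mathbb R^d$ be open and $\tau_1,\tau_2:U\to\mathbb R_{>0}$. A real-analytic $f:U\to\mathbb R$ has $(\tau_1,\tau_2)$-type if for every $\zeta_0\in U$, writing the power series of $f$ at $\zeta_0$ as $\sum_\mu a_{\zeta_0,\mu}(\zeta-\zeta_0)^\mu$ (over multi-indices $\mu$), for every $\zeta$ with $\|\zeta-\zeta_0\|_\infty\le\tau_1(\zeta_0)$ the series converges absolutely and $\sum_{\mu:|\mu|\ge1}|a_{\zeta_0,\mu}|\,|\zeta-\zeta_0|^\mu\le\tau_2(\zeta_0)$, where $|\zeta-\zeta_0|^\mu=\prod_i|\zeta_i-\zeta_{0,i}|^{\mu_i}$. *)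

theory Defs
  imports "HOL-Analysis.Analysis"
begin

text \<open>Points of R^d are vectors real^'d; multi-indices are functions 'd => nat.
  The sup-norm is the library's infnorm (max of absolute values of components).\<close>

definition mono_abs :: "('d::finite \<Rightarrow> nat) \<Rightarrow> real^'d \<Rightarrow> real" where
  "mono_abs \<mu> x = (\<Prod>i\<in>UNIV. \<bar>x $ i\<bar> ^ (\<mu> i))"

definition monom_val :: "('d::finite \<Rightarrow> nat) \<Rightarrow> real^'d \<Rightarrow> real" where
  "monom_val \<mu> x = (\<Prod>i\<in>UNIV. (x $ i) ^ (\<mu> i))"

definition mi_order :: "('d::finite \<Rightarrow> nat) \<Rightarrow> nat" where
  "mi_order \<mu> = (\<Sum>i\<in>UNIV. \<mu> i)"

text \<open>a is a (local) power series of f at z0: the series sum_mu a_mu (z-z0)^mu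
  converges (unconditionally, equivalently absolutely) to f z on a neighbourhood of z0.\<close>
definition power_series_at ::
  "(real^'d::finite \<Rightarrow> real) \<Rightarrow> real^'d \<Rightarrow> (('d \<Rightarrow> nat) \<Rightarrow> real) \<Rightarrow> bool" where
  "power_series_at f z0 a \<longleftrightarrow>
     (\<exists>r>0. \<forall>z. infnorm (z - z0) < r \<longrightarrow> ((\<lambda>\<mu>. a \<mu> * monom_val \<mu> (z - z0)) has_sum f z) UNIV)"

definition real_analytic_on :: "(real^'d::finite) set \<Rightarrow> (real^'d \<Rightarrow> real) \<Rightarrow> bool" where
  "real_analytic_on U f \<longleftrightarrow> (\<forall>z0\<in>U. \<exists>a. power_series_at f z0 a)"

definition of_type ::
  "(real^'d::finite) set \<Rightarrow> (real^'d \<Rightarrow> real) \<Rightarrow> (real^'d \<Rightarrow> real) \<Rightarrow> (real^'d \<Rightarrow> real) \<Rightarrow> bool" where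
  "of_type U f t1 t2 \<longleftrightarrow>
     (\<forall>z\<in>U. t1 z > 0 \<and> t2 z > 0) \<and> real_analytic_on U f \<and>
     (\<forall>z0\<in>U. \<forall>a. power_series_at f z0 a \<longrightarrow>
        (\<forall>z. infnorm (z - z0) \<le> t1 z0 \<longrightarrow>
           (\<lambda>\<mu>. \<bar>a \<mu> * monom_val \<mu> (z - z0)\<bar>) summable_on UNIV \<and>
           (\<Sum>\<^sub>\<infinity>\<mu>\<in>{\<mu>. mi_order \<mu> \<ge> 1}. \<bar>a \<mu>\<bar> * mono_abs \<mu> (z - z0)) \<le> t2 z0))"

end

theory Submission
  imports Defs "HOL-Complex_Analysis.Cauchy_Integral_Formula"
begin

lemma group_has_sum:
  fixes T :: "'j \<Rightarrow> real"
  assumes "(T has_sum s) J" "\<And>j. j\<in>J \<Longrightarrow> p j \<in> K"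
    "\<And>k. k\<in>K \<Longrightarrow> (T has_sum t k) {j\<in>J. p j = k}"
  shows "(t has_sum s) K"
proof -
  have bij: "bij_betw (\<lambda>j. (p j, j)) J (Sigma K (\<lambda>k. {j\<in>J. p j = k}))"
    using assms(2) by (auto simp: bij_betw_def inj_on_def image_def)
  have "((\<lambda>x. T (snd x)) has_sum s) (Sigma K (\<lambda>k. {j\<in>J. p j = k}))"
    using has_sum_reindex_bij_betw[OF bij, of "\<lambda>x. T (snd x)" s] assms(1) by simp
  then show ?thesis
    by (rule has_sum_Sigma') (use assms(3) in simp)
qed

lemma ungroup_has_sum:
  fixes T :: "'j \<Rightarrow> real"
  assumes "T summable_on J" "\<And>j. j\<in>J \<Longrightarrow> p j \<in> K"
    "\<And>k. k\<in>K \<Longrightarrow> (T has_sum t k) {j\<in>J. p j = k}" "(t has_sum s) K"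
  shows "(T has_sum s) J"
proof -
  have bij: "bij_betw (\<lambda>j. (p j, j)) J (Sigma K (\<lambda>k. {j\<in>J. p j = k}))"
    using assms(2) by (auto simp: bij_betw_def inj_on_def image_def)
  have sm: "(\<lambda>x. T (snd x)) summable_on (Sigma K (\<lambda>k. {j\<in>J. p j = k}))"
    using summable_on_reindex_bij_betw[OF bij, of "\<lambda>x. T (snd x)"] assms(1) by simp
  have "((\<lambda>x. T (snd x)) has_sum s) (Sigma K (\<lambda>k. {j\<in>J. p j = k}))"
    by (rule has_sum_SigmaI[OF _ assms(4) sm]) (use assms(3) in simp)
  then show ?thesis
    using has_sum_reindex_bij_betw[OF bij, of "\<lambda>x. T (snd x)" s] by simp
qed

lemma group_summable_nonneg:
  fixes T :: "'j \<Rightarrow> real"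
  assumes "\<And>j. j\<in>J \<Longrightarrow> T j \<ge> 0" "\<And>j. j\<in>J \<Longrightarrow> p j \<in> K"
    "\<And>k. k\<in>K \<Longrightarrow> (T has_sum t k) {j\<in>J. p j = k}" "t summable_on K"
  shows "T summable_on J"
proof -
  have bij: "bij_betw (\<lambda>j. (p j, j)) J (Sigma K (\<lambda>k. {j\<in>J. p j = k}))"
    using assms(2) by (auto simp: bij_betw_def inj_on_def image_def)
  have "(\<lambda>x. T (snd x)) summable_on (Sigma K (\<lambda>k. {j\<in>J. p j = k}))"
    by (rule summable_on_SigmaI[OF _ assms(4)]) (use assms(1,3) in auto)
  then show ?thesis
    using summable_on_reindex_bij_betw[OF bij, of "\<lambda>x. T (snd x)"] by simp
qed

lemma pair_prod:
  fixes \<phi> :: "'x \<Rightarrow> real" and \<psi> :: "'y \<Rightarrow> real"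
  assumes "(\<lambda>x. \<bar>\<phi> x\<bar>) summable_on X" "(\<lambda>y. \<bar>\<psi> y\<bar>) summable_on Y"
  shows "((\<lambda>(x,y). \<phi> x * \<psi> y) has_sum (infsum \<phi> X * infsum \<psi> Y)) (X \<times> Y)"
    and "(\<lambda>(x,y). \<bar>\<phi> x * \<psi> y\<bar>) summable_on (X \<times> Y)"
proof -
  have c1: "(\<lambda>y. \<bar>\<phi> x\<bar> * \<bar>\<psi> y\<bar>) summable_on Y" for x
    using summable_on_cmult_right[OF assms(2), of "\<bar>\<phi> x\<bar>"] by simp
  have c2: "(\<lambda>x. \<bar>\<phi> x\<bar> * infsum (\<lambda>y. \<bar>\<psi> y\<bar>) Y) summable_on X"
    using summable_on_cmult_left[OF assms(1)] by simp
  have a: "(\<lambda>z. norm ((\<lambda>(x,y). \<phi> x * \<psi> y) z)) summable_on (Sigma X (\<lambda>_. Y))"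
    apply (rule Infinite_Sum.abs_summable_on_Sigma_iff[where f="\<lambda>(x,y). \<phi> x * \<psi> y" and A=X and B="\<lambda>_. Y", THEN iffD2])
    using c1 c2 by (simp add: abs_mult infsum_cmult_right infsum_nonneg assms(2))
  then show "(\<lambda>(x,y). \<bar>\<phi> x * \<psi> y\<bar>) summable_on (X \<times> Y)"
    by (simp add: case_prod_unfold)
  have sm: "(\<lambda>(x,y). \<phi> x * \<psi> y) summable_on (X \<times> Y)"
    using a abs_summable_summable by blast
  have "infsum (\<lambda>(x,y). \<phi> x * \<psi> y) (X \<times> Y) = (\<Sum>\<^sub>\<infinity>x\<in>X. \<Sum>\<^sub>\<infinity>y\<in>Y. \<phi> x * \<psi> y)"
    using infsum_Sigma'_banach[OF sm] by simp
  also have "\<dots> = (\<Sum>\<^sub>\<infinity>x\<in>X. \<phi> x * infsum \<psi> Y)"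
    by (simp add: infsum_cmult_right')
  also have "\<dots> = infsum \<phi> X * infsum \<psi> Y"
    by (simp add: infsum_cmult_left')
  finally show "((\<lambda>(x,y). \<phi> x * \<psi> y) has_sum (infsum \<phi> X * infsum \<psi> Y)) (X \<times> Y)"
    using sm by (metis has_sum_infsum)
qed

lemma list_pow:
  fixes \<phi> :: "'x \<Rightarrow> real"
  assumes "(\<lambda>x. \<bar>\<phi> x\<bar>) summable_on N"
  shows "((\<lambda>l. prod_list (map \<phi> l)) has_sum (infsum \<phi> N)^k) {l. length l = k \<and> set l \<subseteq> N}
    \<and> (\<lambda>l. \<bar>prod_list (map \<phi> l)\<bar>) summable_on {l. length l = k \<and> set l \<subseteq> N}"
proof (induction k)
  case 0
  have e: "{l. length l = 0 \<and> set l \<subseteq> N} = {[]}" by auto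
  show ?case unfolding e using has_sum_finite[of "{[]}" "\<lambda>l. prod_list (map \<phi> l)"] by simp
next
  case (Suc k)
  let ?L = "{l. length l = k \<and> set l \<subseteq> N}"
  let ?P = "\<lambda>l. prod_list (map \<phi> l)"
  have inf: "infsum ?P ?L = (infsum \<phi> N)^k"
    using Suc.IH infsumI by blast
  have bij: "bij_betw (\<lambda>(x,l). x # l) (N \<times> ?L) {l. length l = Suc k \<and> set l \<subseteq> N}"
    unfolding bij_betw_def inj_on_def
  proof (intro conjI ballI impI)
    show "(\<lambda>(x,l). x # l) ` (N \<times> ?L) = {l. length l = Suc k \<and> set l \<subseteq> N}"
    proof (intro equalityI subsetI)
      fix l assume "l \<in> {l. length l = Suc k \<and> set l \<subseteq> N}"
      then show "l \<in> (\<lambda>(x,l). x # l) ` (N \<times> ?L)"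
        by (cases l) (auto simp: image_def)
    qed auto
  qed auto
  have pp: "((\<lambda>(x,l). \<phi> x * ?P l) has_sum (infsum \<phi> N * infsum ?P ?L)) (N \<times> ?L)"
    "(\<lambda>(x,l). \<bar>\<phi> x * ?P l\<bar>) summable_on (N \<times> ?L)"
    using pair_prod[OF assms, of ?P ?L] Suc.IH by auto
  have "((\<lambda>z. ?P ((\<lambda>(x,l). x # l) z)) has_sum (infsum \<phi> N)^Suc k) (N \<times> ?L)"
    using pp(1) inf by (simp add: case_prod_unfold)
  moreover have "(\<lambda>z. \<bar>?P ((\<lambda>(x,l). x # l) z)\<bar>) summable_on (N \<times> ?L)"
    using pp(2) by (simp add: case_prod_unfold)
  ultimately show ?case
    using has_sum_reindex_bij_betw[OF bij, of ?P] summable_on_reindex_bij_betw[OF bij, of "\<lambda>l. \<bar>?P l\<bar>"]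
    by simp
qed

lemma pie_prod:
  fixes \<phi> :: "'i \<Rightarrow> 'x \<Rightarrow> real"
  assumes "finite I" "\<And>i. i\<in>I \<Longrightarrow> (\<lambda>x. \<bar>\<phi> i x\<bar>) summable_on X i"
  shows "((\<lambda>M. \<Prod>i\<in>I. \<phi> i (M i)) has_sum (\<Prod>i\<in>I. infsum (\<phi> i) (X i))) (PiE I X)
     \<and> (\<lambda>M. \<bar>\<Prod>i\<in>I. \<phi> i (M i)\<bar>) summable_on PiE I X"
  using assms
proof (induction I rule: finite_induct)
  case empty
  then show ?case using has_sum_finite[of "{\<lambda>x. undefined}" "\<lambda>M. 1::real"] by simp
next
  case (insert i F)
  let ?P = "\<lambda>M. \<Prod>i\<in>F. \<phi> i (M i)"
  have IH: "(?P has_sum (\<Prod>i\<in>F. infsum (\<phi> i) (X i))) (PiE F X)"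
     "(\<lambda>M. \<bar>?P M\<bar>) summable_on PiE F X"
    using insert by auto
  have inf: "infsum ?P (PiE F X) = (\<Prod>i\<in>F. infsum (\<phi> i) (X i))"
    using IH infsumI by blast
  have bij: "bij_betw (\<lambda>(M,y). M(i:=y)) (PiE F X \<times> X i) (PiE (insert i F) X)"
    unfolding bij_betw_def
  proof
    show "inj_on (\<lambda>(M,y). M(i:=y)) (PiE F X \<times> X i)"
      by (rule inj_combinator'[OF insert(2)])
    show "(\<lambda>(M,y). M(i:=y)) ` (PiE F X \<times> X i) = PiE (insert i F) X"
      unfolding PiE_insert_eq by (subst swap_product [symmetric]) (simp add: image_image case_prod_unfold)
  qed
  have eqp: "(\<Prod>j\<in>insert i F. \<phi> j ((M(i:=y)) j)) = ?P M * \<phi> i y" for M y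
  proof -
    have "(\<Prod>j\<in>insert i F. \<phi> j ((M(i:=y)) j)) = \<phi> i y * (\<Prod>j\<in>F. \<phi> j ((M(i:=y)) j))"
      using insert(1,2) by simp
    also have "(\<Prod>j\<in>F. \<phi> j ((M(i:=y)) j)) = ?P M"
      using insert(2) by (intro prod.cong) auto
    finally show ?thesis by simp
  qed
  have pp: "((\<lambda>(M,y). ?P M * \<phi> i y) has_sum (infsum ?P (PiE F X) * infsum (\<phi> i) (X i))) (PiE F X \<times> X i)"
    "(\<lambda>(M,y). \<bar>?P M * \<phi> i y\<bar>) summable_on (PiE F X \<times> X i)"
    using pair_prod[OF IH(2) insert(4)] by auto
  have feq: "(\<lambda>z. (\<lambda>M. \<Prod>j\<in>insert i F. \<phi> j (M j)) ((\<lambda>(M,y). M(i:=y)) z)) = (\<lambda>(M,y). ?P M * \<phi> i y)"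
  proof (rule ext)
    fix z :: "('i \<Rightarrow> 'x) \<times> 'x"
    obtain M y where z: "z = (M,y)" by (cases z)
    show "(\<lambda>M. \<Prod>j\<in>insert i F. \<phi> j (M j)) ((\<lambda>(M,y). M(i:=y)) z) = (\<lambda>(M,y). ?P M * \<phi> i y) z"
      unfolding z by (simp only: case_prod_conv eqp)
  qed
  have val: "infsum ?P (PiE F X) * infsum (\<phi> i) (X i) = (\<Prod>j\<in>insert i F. infsum (\<phi> j) (X j))"
    using inf insert(1,2) by (simp add: mult.commute)
  have "((\<lambda>z. (\<lambda>M. \<Prod>j\<in>insert i F. \<phi> j (M j)) ((\<lambda>(M,y). M(i:=y)) z)) has_sum (\<Prod>j\<in>insert i F. infsum (\<phi> j) (X j))) (PiE F X \<times> X i)"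
    unfolding feq val[symmetric] by (rule pp(1))
  moreover have "(\<lambda>z. \<bar>(\<lambda>M. \<Prod>j\<in>insert i F. \<phi> j (M j)) ((\<lambda>(M,y). M(i:=y)) z)\<bar>) summable_on (PiE F X \<times> X i)"
    using pp(2) fun_cong[OF feq] by (simp only: case_prod_unfold)
  ultimately show ?case
    using has_sum_reindex_bij_betw[OF bij, of "\<lambda>M. \<Prod>j\<in>insert i F. \<phi> j (M j)"]
      summable_on_reindex_bij_betw[OF bij, of "\<lambda>M. \<bar>\<Prod>j\<in>insert i F. \<phi> j (M j)\<bar>"]
    by simp
qed

lemma infnorm_Max_cart: "infnorm (x::real^'n) = Max (range (\<lambda>i. \<bar>x$i\<bar>))"
proof -
  have "{\<bar>x$i\<bar> |i. i\<in>UNIV} = range (\<lambda>i. \<bar>x$i\<bar>)" by auto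
  then show ?thesis unfolding infnorm_cart by (simp add: cSup_eq_Max)
qed

lemma infnorm_le_iff: "infnorm (x::real^'n) \<le> r \<longleftrightarrow> (\<forall>i. \<bar>x$i\<bar> \<le> r)"
  unfolding infnorm_Max_cart by simp

lemma infnorm_less_iff: "infnorm (x::real^'n) < r \<longleftrightarrow> (\<forall>i. \<bar>x$i\<bar> < r)"
  unfolding infnorm_Max_cart by simp

lemma monom_val_add: "monom_val (\<lambda>j. \<mu> j + \<mu>' j) y = monom_val \<mu> y * monom_val \<mu>' y"
  unfolding monom_val_def by (simp add: power_add prod.distrib)

lemma monom_val_zero[simp]: "monom_val (\<lambda>_. 0) y = 1"
  unfolding monom_val_def by simp

lemma abs_monom_val: "\<bar>monom_val \<mu> y\<bar> = mono_abs \<mu> y"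
  unfolding monom_val_def mono_abs_def by (simp add: abs_prod power_abs)

lemma mono_abs_nonneg: "mono_abs \<mu> y \<ge> 0"
  unfolding mono_abs_def by (simp add: prod_nonneg)

lemma mono_abs_eq_monom_val: "(\<And>j. y$j \<ge> 0) \<Longrightarrow> mono_abs \<mu> y = monom_val \<mu> y"
  unfolding monom_val_def mono_abs_def by simp

lemma mi_order_ge1: "mi_order \<mu> \<ge> 1 \<longleftrightarrow> \<mu> \<noteq> (\<lambda>_. 0)"
proof -
  have "mi_order \<mu> = 0 \<longleftrightarrow> (\<forall>j. \<mu> j = 0)"
    unfolding mi_order_def by simp
  then show ?thesis by (auto simp: fun_eq_iff)
qed

lemma monom_val_at0: "monom_val \<mu> 0 = (if \<mu> = (\<lambda>_. 0) then 1 else 0)"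
proof (cases "\<mu> = (\<lambda>_. 0)")
  case False
  then obtain j where "\<mu> j \<noteq> 0" by auto
  then show ?thesis unfolding monom_val_def using False
    by (auto simp: prod_zero_iff)
qed simp

lemma mono_abs_at0: "\<mu> \<noteq> (\<lambda>_. 0) \<Longrightarrow> mono_abs \<mu> 0 = 0"
  using monom_val_at0[of \<mu>] abs_monom_val[of \<mu> 0] by simp

lemma mono_abs_at0': "mi_order \<mu> \<ge> 1 \<Longrightarrow> mono_abs \<mu> 0 = 0"
  using mi_order_ge1 mono_abs_at0 by blast

lemma mono_abs_scale: "mono_abs \<mu> (c *\<^sub>R y) = \<bar>c\<bar> ^ mi_order \<mu> * mono_abs \<mu> y"
  unfolding mono_abs_def mi_order_def
  by (simp add: abs_mult power_mult_distrib prod.distrib power_sum)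

lemma monom_val_scale: "monom_val \<mu> (c *\<^sub>R y) = c ^ mi_order \<mu> * monom_val \<mu> y"
  unfolding monom_val_def mi_order_def
  by (simp add: power_mult_distrib prod.distrib power_sum)

lemma type_scale:
  fixes a :: "('d::finite \<Rightarrow> nat) \<Rightarrow> real"
  assumes H: "\<And>y::real^'d. infnorm y \<le> t1 \<Longrightarrow> (\<lambda>\<mu>. \<bar>a \<mu> * monom_val \<mu> y\<bar>) summable_on UNIV \<and>
        (\<Sum>\<^sub>\<infinity>\<mu>\<in>{\<mu>. mi_order \<mu> \<ge> 1}. \<bar>a \<mu>\<bar> * mono_abs \<mu> y) \<le> t2"
    and l: "0 \<le> l" "l \<le> 1" and y: "infnorm y \<le> l * t1" and t1: "t1 > 0"
  shows "(\<lambda>\<mu>. \<bar>a \<mu>\<bar> * mono_abs \<mu> y) summable_on UNIV"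
    and "(\<Sum>\<^sub>\<infinity>\<mu>\<in>{\<mu>. mi_order \<mu> \<ge> 1}. \<bar>a \<mu>\<bar> * mono_abs \<mu> y) \<le> l * t2"
proof -
  have "l * t1 \<le> t1" using l t1 by (simp add: mult_left_le_one_le)
  then have "infnorm y \<le> t1" using y by linarith
  then show sy: "(\<lambda>\<mu>. \<bar>a \<mu>\<bar> * mono_abs \<mu> y) summable_on UNIV"
    using H[of y] by (simp add: abs_mult abs_monom_val)
  show "(\<Sum>\<^sub>\<infinity>\<mu>\<in>{\<mu>. mi_order \<mu> \<ge> 1}. \<bar>a \<mu>\<bar> * mono_abs \<mu> y) \<le> l * t2"
  proof (cases "l = 0")
    case True
    then have "infnorm y = 0" using y infnorm_pos_le[of y] by simp
    then have "y = 0" using infnorm_eq_0 by blast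
    then have "(\<Sum>\<^sub>\<infinity>\<mu>\<in>{\<mu>. mi_order \<mu> \<ge> 1}. \<bar>a \<mu>\<bar> * mono_abs \<mu> y) = 0"
      by (intro infsum_0) (simp add: mono_abs_at0')
    moreover have "t2 \<ge> 0"
    proof -
      have "0 \<le> (\<Sum>\<^sub>\<infinity>\<mu>\<in>{\<mu>. mi_order \<mu> \<ge> 1}. \<bar>a \<mu>\<bar> * mono_abs \<mu> y)"
        by (intro infsum_nonneg) (simp add: mono_abs_nonneg)
      then show ?thesis using H[of y] \<open>infnorm y \<le> t1\<close> by linarith
    qed
    ultimately show ?thesis using True by simp
  next
    case False
    then have lp: "l > 0" using l by simp
    define y' where "y' = (1/l) *\<^sub>R y"
    have yy: "y = l *\<^sub>R y'" using lp unfolding y'_def by simp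
    have "infnorm y' = infnorm y / l" unfolding y'_def infnorm_mul using lp by simp
    also have "\<dots> \<le> t1" using y lp by (simp add: divide_le_eq mult.commute)
    finally have y't: "infnorm y' \<le> t1" .
    have sy': "(\<lambda>\<mu>. \<bar>a \<mu>\<bar> * mono_abs \<mu> y') summable_on UNIV"
      using H[OF y't] by (simp add: abs_mult abs_monom_val)
    have le: "\<bar>a \<mu>\<bar> * mono_abs \<mu> y \<le> l * (\<bar>a \<mu>\<bar> * mono_abs \<mu> y')" if "\<mu> \<in> {\<mu>. mi_order \<mu> \<ge> 1}" for \<mu>
    proof -
      have "l ^ mi_order \<mu> \<le> l" using that l by (simp add: power_le_one power_decreasing[of 1 "mi_order \<mu>" l, simplified])
      then have "l ^ mi_order \<mu> * (\<bar>a \<mu>\<bar> * mono_abs \<mu> y') \<le> l * (\<bar>a \<mu>\<bar> * mono_abs \<mu> y')"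
        by (intro mult_right_mono) (auto simp: mono_abs_nonneg)
      then show ?thesis unfolding yy mono_abs_scale using lp by (simp add: mult_ac)
    qed
    have "(\<Sum>\<^sub>\<infinity>\<mu>\<in>{\<mu>. mi_order \<mu> \<ge> 1}. \<bar>a \<mu>\<bar> * mono_abs \<mu> y) \<le> (\<Sum>\<^sub>\<infinity>\<mu>\<in>{\<mu>. mi_order \<mu> \<ge> 1}. l * (\<bar>a \<mu>\<bar> * mono_abs \<mu> y'))"
      by (rule infsum_mono[OF summable_on_subset_banach[OF sy] summable_on_cmult_right[OF summable_on_subset_banach[OF sy']] le]) auto
    also have "\<dots> = l * (\<Sum>\<^sub>\<infinity>\<mu>\<in>{\<mu>. mi_order \<mu> \<ge> 1}. \<bar>a \<mu>\<bar> * mono_abs \<mu> y')"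
      by (rule infsum_cmult_right) (rule summable_on_subset_banach[OF sy']; simp)
    also have "\<dots> \<le> l * t2" using H[OF y't] l by (simp add: mult_left_mono)
    finally show ?thesis .
  qed
qed

lemma powser_all_zero:
  fixes G :: "nat \<Rightarrow> real"
  assumes r: "r > 0" and sm: "\<And>s. \<bar>s\<bar> < r \<Longrightarrow> (\<lambda>k. G k * s ^ k) sums 0"
  shows "G k = 0"
proof (cases "k = 0")
  case True
  have "(\<lambda>k. G k * 0 ^ k) sums G 0" using powser_sums_zero[of G] by simp
  moreover have "(\<lambda>k. G k * 0 ^ k) sums 0" using sm[of 0] r by simp
  ultimately show ?thesis using True sums_unique2 by blast
next
  case False
  show ?thesis
  proof (rule ccontr)
    assume nz: "G k \<noteq> 0"
    obtain s where s: "0 < s" "\<And>z::real. z \<in> cball 0 s - {0} \<Longrightarrow> (\<lambda>_. 0::real) z \<noteq> 0"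
      by (rule powser_0_nonzero[of r 0 G "\<lambda>_. 0" k]) (use r sm nz False in auto)
    have "s \<in> cball 0 s - {0}" using s(1) by simp
    then show False using s(2) by blast
  qed
qed

lemma monom_val_split:
  fixes y :: "real^'d::finite"
  shows "monom_val \<mu> (\<chi> j. if j = j0 then s else y$j) = s ^ (\<mu> j0) * monom_val (\<mu>(j0:=0)) y"
proof -
  have "monom_val \<mu> (\<chi> j. if j = j0 then s else y$j) = s ^ (\<mu> j0) * (\<Prod>j\<in>UNIV-{j0}. (y $ j) ^ \<mu> j)"
    unfolding monom_val_def by (subst prod.remove[of UNIV j0]) (auto intro!: prod.cong)
  moreover have "monom_val (\<mu>(j0:=0)) y = (\<Prod>j\<in>UNIV-{j0}. (y $ j) ^ \<mu> j)"
    unfolding monom_val_def by (subst prod.remove[of UNIV j0]) (auto intro!: prod.cong)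
  ultimately show ?thesis by simp
qed

lemma uniq_aux:
  fixes r :: real
  assumes "finite (S :: 'd::finite set)" "r > 0"
  shows "\<And>d :: ('d \<Rightarrow> nat) \<Rightarrow> real. (\<And>\<mu>. (\<exists>j. j \<notin> S \<and> \<mu> j \<noteq> 0) \<Longrightarrow> d \<mu> = 0) \<Longrightarrow>
     (\<And>y::real^'d. infnorm y < r \<Longrightarrow> ((\<lambda>\<mu>. d \<mu> * monom_val \<mu> y) has_sum 0) UNIV) \<Longrightarrow> d = (\<lambda>_. 0)"
  using assms(1)
proof (induction S rule: finite_induct)
  case empty
  fix d :: "('d \<Rightarrow> nat) \<Rightarrow> real"
  assume supp: "\<And>\<mu>. (\<exists>j. j \<notin> {} \<and> \<mu> j \<noteq> 0) \<Longrightarrow> d \<mu> = 0"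
    and hs: "\<And>y::real^'d. infnorm y < r \<Longrightarrow> ((\<lambda>\<mu>. d \<mu> * monom_val \<mu> y) has_sum 0) UNIV"
  have z: "d \<mu> = 0" if "\<mu> \<noteq> (\<lambda>_. 0)" for \<mu>
    using supp that by (auto simp: fun_eq_iff)
  have "((\<lambda>\<mu>. d \<mu> * monom_val \<mu> 0) has_sum 0) UNIV" using hs[of 0] assms(2) by (simp add: infnorm_0)
  then have "((\<lambda>\<mu>. d \<mu> * monom_val \<mu> 0) has_sum 0) {\<lambda>_. 0}"
    by (subst (asm) has_sum_cong_neutral[where T="{\<lambda>_. 0}"]) (auto simp: z)
  moreover have "((\<lambda>\<mu>. d \<mu> * monom_val \<mu> 0) has_sum d (\<lambda>_. 0)) {\<lambda>_. 0}"
    using has_sum_finite[of "{\<lambda>_. 0}" "\<lambda>\<mu>. d \<mu> * monom_val \<mu> 0"] by simp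
  ultimately have "d (\<lambda>_. 0) = 0" using has_sum_unique by blast
  then show "d = (\<lambda>_. 0)" using z by (metis)
next
  case (insert j0 S)
  fix d :: "('d \<Rightarrow> nat) \<Rightarrow> real"
  assume supp: "\<And>\<mu>. (\<exists>j. j \<notin> insert j0 S \<and> \<mu> j \<noteq> 0) \<Longrightarrow> d \<mu> = 0"
    and hs: "\<And>y::real^'d. infnorm y < r \<Longrightarrow> ((\<lambda>\<mu>. d \<mu> * monom_val \<mu> y) has_sum 0) UNIV"
  define dk where "dk k \<mu> = (if \<mu> j0 = 0 then d (\<mu>(j0:=k)) else 0)" for k \<mu>
  have dk0: "dk k = (\<lambda>_. 0)" for k
  proof (rule insert.IH)
    fix \<mu> :: "'d \<Rightarrow> nat" assume "\<exists>j. j \<notin> S \<and> \<mu> j \<noteq> 0"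
    then obtain j where j: "j \<notin> S" "\<mu> j \<noteq> 0" by blast
    show "dk k \<mu> = 0"
    proof (cases "j = j0")
      case True then show ?thesis using j unfolding dk_def by simp
    next
      case False
      then have "d (\<mu>(j0:=k)) = 0" using j by (intro supp) auto
      then show ?thesis unfolding dk_def by simp
    qed
  next
    fix y :: "real^'d" assume y: "infnorm y < r"
    define Y where "Y s = (\<chi> j. if j = j0 then s else y$j)" for s
    have Yr: "infnorm (Y s) < r" if "\<bar>s\<bar> < r" for s
      using that y unfolding infnorm_less_iff Y_def by auto
    define E where "E k \<mu> = dk k \<mu> * monom_val \<mu> y" for k \<mu>
    define fib where "fib k = {\<mu>::'d\<Rightarrow>nat. \<mu> j0 = k}" for k
    have Fval: "d \<mu> * monom_val \<mu> (Y s) = s ^ k * E k (\<mu>(j0:=0))" if "\<mu> \<in> fib k" for \<mu> k s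
    proof -
      have "\<mu>(j0:=k) = \<mu>" using that by (auto simp: fib_def)
      then show ?thesis
        using that unfolding E_def dk_def fib_def Y_def monom_val_split by simp
    qed
    have bw: "((\<lambda>\<mu>. E k (\<mu>(j0:=0))) has_sum t) (fib k) \<longleftrightarrow> (E k has_sum t) {\<mu>. \<mu> j0 = 0}" for k t
      by (rule has_sum_reindex_bij_witness[where i="\<lambda>\<mu>. \<mu>(j0:=k)" and j="\<lambda>\<mu>. \<mu>(j0:=0)"])
         (auto simp: fib_def)
    have bws: "(\<lambda>\<mu>. E k (\<mu>(j0:=0))) summable_on (fib k) \<longleftrightarrow> E k summable_on {\<mu>. \<mu> j0 = 0}" for k
      using bw unfolding summable_on_def by blast
    have Eout: "E k \<mu> = 0" if "\<mu> \<notin> {\<mu>. \<mu> j0 = 0}" for k \<mu>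
      using that unfolding E_def dk_def by simp
    have uni: "(E k has_sum t) UNIV \<longleftrightarrow> (E k has_sum t) {\<mu>. \<mu> j0 = 0}" for k t
      by (rule has_sum_cong_neutral) (auto simp: Eout)
    define s0 where "s0 = r / 2"
    have s0: "\<bar>s0\<bar> < r" "s0 \<noteq> 0" using assms(2) unfolding s0_def by auto
    have Esum: "E k summable_on UNIV" for k
    proof -
      have "(\<lambda>\<mu>. d \<mu> * monom_val \<mu> (Y s0)) summable_on UNIV"
        using hs[OF Yr[OF s0(1)]] unfolding summable_on_def by blast
      then have "(\<lambda>\<mu>. d \<mu> * monom_val \<mu> (Y s0)) summable_on fib k"
        by (rule summable_on_subset_banach) simp
      then have "(\<lambda>\<mu>. s0 ^ k * E k (\<mu>(j0:=0))) summable_on fib k"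
        by (rule summable_on_cong[THEN iffD1, rotated]) (simp add: Fval)
      then have "(\<lambda>\<mu>. E k (\<mu>(j0:=0))) summable_on fib k"
        using summable_on_cmult_right'[where c="s0 ^ k" and f="\<lambda>\<mu>. E k (\<mu>(j0:=0))" and A="fib k"] s0(2) by simp
      then have "E k summable_on {\<mu>. \<mu> j0 = 0}" using bws by blast
      then show ?thesis using uni unfolding summable_on_def by blast
    qed
    define G where "G k = infsum (E k) UNIV" for k
    have EG: "(E k has_sum G k) UNIV" for k using Esum G_def by simp
    have fibsum: "((\<lambda>\<mu>. d \<mu> * monom_val \<mu> (Y s)) has_sum (s ^ k * G k)) (fib k)" for s k
    proof -
      have "((\<lambda>\<mu>. E k (\<mu>(j0:=0))) has_sum G k) (fib k)" using EG uni bw by blast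
      then have "((\<lambda>\<mu>. s ^ k * E k (\<mu>(j0:=0))) has_sum (s ^ k * G k)) (fib k)"
        by (rule has_sum_cmult_right)
      then show ?thesis
        by (rule has_sum_cong[THEN iffD1, rotated]) (simp add: Fval)
    qed
    have ser: "(\<lambda>k. G k * s ^ k) sums 0" if "\<bar>s\<bar> < r" for s
    proof -
      have "((\<lambda>k. s ^ k * G k) has_sum 0) UNIV"
        by (rule group_has_sum[OF hs[OF Yr[OF that]], where p="\<lambda>\<mu>. \<mu> j0"])
           (use fibsum in \<open>auto simp: fib_def\<close>)
      then show ?thesis by (simp add: has_sum_imp_sums mult.commute)
    qed
    have "G k = 0" for k by (rule powser_all_zero[OF assms(2) ser])
    then show "((\<lambda>\<mu>. dk k \<mu> * monom_val \<mu> y) has_sum 0) UNIV"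
      using EG unfolding E_def by metis
  qed
  show "d = (\<lambda>_. 0)"
  proof
    fix \<mu> :: "'d \<Rightarrow> nat"
    have "d \<mu> = dk (\<mu> j0) (\<mu>(j0:=0))" unfolding dk_def by simp
    then show "d \<mu> = 0" using dk0 by simp
  qed
qed

lemma power_series_unique:
  fixes a c :: "('d::finite \<Rightarrow> nat) \<Rightarrow> real" and z0 :: "real^'d"
  assumes "power_series_at f z0 a" "power_series_at f z0 c"
  shows "a = c"
proof -
  obtain r1 where r1: "r1 > 0" "\<And>z. infnorm (z - z0) < r1 \<Longrightarrow> ((\<lambda>\<mu>. a \<mu> * monom_val \<mu> (z - z0)) has_sum f z) UNIV"
    using assms(1) unfolding power_series_at_def by blast
  obtain r2 where r2: "r2 > 0" "\<And>z. infnorm (z - z0) < r2 \<Longrightarrow> ((\<lambda>\<mu>. c \<mu> * monom_val \<mu> (z - z0)) has_sum f z) UNIV"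
    using assms(2) unfolding power_series_at_def by blast
  define r where "r = min r1 r2"
  have "(\<lambda>\<mu>. a \<mu> - c \<mu>) = (\<lambda>_. 0)"
  proof (rule uniq_aux[of UNIV r])
    show "r > 0" using r1 r2 r_def by simp
    fix y :: "real^'d" assume "infnorm y < r"
    then have i1: "infnorm ((z0 + y) - z0) < r1" and i2: "infnorm ((z0 + y) - z0) < r2" unfolding r_def by auto
    have m: "((\<lambda>\<mu>. - (c \<mu> * monom_val \<mu> y)) has_sum - f (z0 + y)) UNIV"
      using r2(2)[OF i2] has_sum_uminus[where f="\<lambda>\<mu>. c \<mu> * monom_val \<mu> y" and A=UNIV and a="- f (z0 + y)"] by simp
    from has_sum_add[OF r1(2)[OF \<open>infnorm ((z0 + y) - z0) < r1\<close>] m]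
    show "((\<lambda>\<mu>. (a \<mu> - c \<mu>) * monom_val \<mu> y) has_sum 0) UNIV"
      by (simp add: algebra_simps)
  qed auto
  then show ?thesis by (auto simp: fun_eq_iff)
qed

lemma monom_val_sumlist:
  "monom_val (\<lambda>j. sum_list (map (\<lambda>m. m j) l)) y = prod_list (map (\<lambda>m. monom_val m y) l)"
proof (induction l)
  case Nil then show ?case by simp
next
  case (Cons m l)
  have "monom_val (\<lambda>j. sum_list (map (\<lambda>m. m j) (m # l))) y
      = monom_val (\<lambda>j. m j + sum_list (map (\<lambda>m. m j) l)) y" by simp
  also have "\<dots> = monom_val m y * monom_val (\<lambda>j. sum_list (map (\<lambda>m. m j) l)) y"
    by (rule monom_val_add)
  finally show ?case using Cons by simp
qed

lemma monom_val_sum: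
  assumes "finite S"
  shows "monom_val (\<lambda>j. \<Sum>i\<in>S. \<phi> i j) y = (\<Prod>i\<in>S. monom_val (\<phi> i) y)"
  using assms
proof (induction S rule: finite_induct)
  case empty then show ?case by simp
next
  case (insert i F)
  have "monom_val (\<lambda>j. \<Sum>i\<in>insert i F. \<phi> i j) y = monom_val (\<lambda>j. \<phi> i j + (\<Sum>i\<in>F. \<phi> i j)) y"
    using insert(1,2) by simp
  also have "\<dots> = monom_val (\<phi> i) y * monom_val (\<lambda>j. \<Sum>i\<in>F. \<phi> i j) y"
    by (rule monom_val_add)
  finally show ?case using insert by simp
qed

lemma prod_list_map_mult: "prod_list (map (\<lambda>m. f m * g m) l) = prod_list (map f l) * (prod_list (map g l) :: real)"
  by (induction l) (auto simp: mult_ac)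

lemma abs_prod_list: "\<bar>prod_list (map f l)\<bar> = prod_list (map (\<lambda>m. \<bar>f m\<bar>) l :: real list)"
  by (induction l) (auto simp: abs_mult)

lemma mi_order_sumlist: "mi_order (\<lambda>j. sum_list (map (\<lambda>m. m j) l)) = sum_list (map mi_order l)"
  by (induction l) (auto simp: mi_order_def sum.distrib)

locale compo =
  fixes A :: "'n::finite \<Rightarrow> ('d::finite \<Rightarrow> nat) \<Rightarrow> real"
    and B :: "('n \<Rightarrow> nat) \<Rightarrow> real"
    and t1 t2 s1 s2 :: real
  assumes pos: "t1 > 0" "t2 > 0" "s1 > 0" "s2 > 0"
    and HA: "\<And>i y. infnorm y \<le> t1 \<Longrightarrow> (\<lambda>\<mu>. \<bar>A i \<mu> * monom_val \<mu> y\<bar>) summable_on UNIV \<and>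
        (\<Sum>\<^sub>\<infinity>\<mu>\<in>{\<mu>. mi_order \<mu> \<ge> 1}. \<bar>A i \<mu>\<bar> * mono_abs \<mu> y) \<le> t2"
    and HB: "\<And>v. infnorm v \<le> s1 \<Longrightarrow> (\<lambda>\<nu>. \<bar>B \<nu> * monom_val \<nu> v\<bar>) summable_on UNIV \<and>
        (\<Sum>\<^sub>\<infinity>\<nu>\<in>{\<nu>. mi_order \<nu> \<ge> 1}. \<bar>B \<nu>\<bar> * mono_abs \<nu> v) \<le> s2"
begin

definition "N = {\<mu>::'d\<Rightarrow>nat. mi_order \<mu> \<ge> 1}"
definition "J = {M :: 'n \<Rightarrow> ('d\<Rightarrow>nat) list. \<forall>i. set (M i) \<subseteq> N}"
definition "nu M = (\<lambda>i. length (M i))"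
definition "deg M = (\<lambda>j. \<Sum>i\<in>UNIV. sum_list (map (\<lambda>m. m j) (M i)))"
definition "K M = B (nu M) * (\<Prod>i\<in>UNIV. prod_list (map (A i) (M i)))"
definition "T y M = K M * monom_val (deg M) y"
definition "S i y = infsum (\<lambda>m. \<bar>A i m\<bar> * mono_abs m y) N"
definition "D i y = infsum (\<lambda>m. A i m * monom_val m y) N"
definition "c \<mu> = infsum K {M\<in>J. deg M = \<mu>}"
definition "L k = {l. length l = k \<and> set l \<subseteq> N}"
definition "\<rho> = min t1 (s1 * t1 / t2)"

lemma T_eq: "T y M = B (nu M) * (\<Prod>i\<in>UNIV. prod_list (map (\<lambda>m. A i m * monom_val m y) (M i)))"
proof -
  have "monom_val (deg M) y = (\<Prod>i\<in>UNIV. monom_val (\<lambda>j. sum_list (map (\<lambda>m. m j) (M i))) y)"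
    unfolding deg_def by (rule monom_val_sum) simp
  also have "\<dots> = (\<Prod>i\<in>UNIV. prod_list (map (\<lambda>m. monom_val m y) (M i)))"
    by (simp add: monom_val_sumlist)
  finally show ?thesis
    unfolding T_def K_def by (simp add: prod_list_map_mult prod.distrib mult_ac)
qed

lemma absT_eq: "\<bar>T y M\<bar> = \<bar>B (nu M)\<bar> * (\<Prod>i\<in>UNIV. prod_list (map (\<lambda>m. \<bar>A i m\<bar> * mono_abs m y) (M i)))"
  unfolding T_eq by (simp add: abs_mult abs_prod abs_prod_list abs_monom_val)

lemma fiber_nu: "{M\<in>J. nu M = \<nu>} = PiE UNIV (\<lambda>i. L (\<nu> i))"
  by (auto simp: J_def nu_def L_def PiE_iff fun_eq_iff)

lemma deg_N_iff: "M \<in> J \<Longrightarrow> deg M \<in> N \<longleftrightarrow> nu M \<in> {\<nu>. mi_order \<nu> \<ge> 1}"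
proof -
  assume M: "M \<in> J"
  have "mi_order (deg M) = (\<Sum>i\<in>UNIV. sum_list (map mi_order (M i)))"
    unfolding deg_def mi_order_def
    by (subst sum.swap) (simp add: mi_order_sumlist[unfolded mi_order_def])
  moreover have "(\<Sum>i\<in>UNIV. sum_list (map mi_order (M i))) \<ge> 1 \<longleftrightarrow> (\<exists>i. M i \<noteq> [])"
  proof
    assume "(\<Sum>i\<in>UNIV. sum_list (map mi_order (M i))) \<ge> 1"
    then show "\<exists>i. M i \<noteq> []" by (metis (no_types) list.simps(8) sum_list.Nil sum.neutral not_one_le_zero)
  next
    assume "\<exists>i. M i \<noteq> []"
    then obtain i m l where i: "M i = m # l" by (meson list.exhaust)
    have "set (M i) \<subseteq> N" using M unfolding J_def by auto
    then have "m \<in> N" using i by auto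
    then have "1 \<le> mi_order m" unfolding N_def by simp
    also have "\<dots> \<le> sum_list (map mi_order (M i))" using i by simp
    also have "\<dots> \<le> (\<Sum>i\<in>UNIV. sum_list (map mi_order (M i)))"
      by (rule member_le_sum) auto
    finally show "(\<Sum>i\<in>UNIV. sum_list (map mi_order (M i))) \<ge> 1" .
  qed
  moreover have "mi_order (nu M) \<ge> 1 \<longleftrightarrow> (\<exists>i. M i \<noteq> [])"
    unfolding mi_order_ge1 nu_def by (auto simp: fun_eq_iff)
  ultimately show ?thesis unfolding N_def by simp
qed

end

context compo
begin

lemma fib_has_sum_gen:
  fixes \<phi> :: "'n \<Rightarrow> ('d \<Rightarrow> nat) \<Rightarrow> real" and b :: real
  assumes sm: "\<And>i. (\<lambda>m. \<bar>\<phi> i m\<bar>) summable_on N"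
  shows "((\<lambda>M. b * (\<Prod>i\<in>UNIV. prod_list (map (\<phi> i) (M i)))) has_sum
           (b * (\<Prod>i\<in>UNIV. (infsum (\<phi> i) N)^(\<nu> i)))) {M\<in>J. nu M = \<nu>}"
proof -
  have lp: "((\<lambda>l. prod_list (map (\<phi> i) l)) has_sum (infsum (\<phi> i) N)^k) (L k)
    \<and> (\<lambda>l. \<bar>prod_list (map (\<phi> i) l)\<bar>) summable_on (L k)" for i k
    unfolding L_def by (rule list_pow[OF sm])
  have pp: "((\<lambda>M. \<Prod>i\<in>UNIV. prod_list (map (\<phi> i) (M i))) has_sum
     (\<Prod>i\<in>UNIV. infsum (\<lambda>l. prod_list (map (\<phi> i) l)) (L (\<nu> i)))) (PiE UNIV (\<lambda>i. L (\<nu> i)))"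
    using pie_prod[of UNIV "\<lambda>i l. prod_list (map (\<phi> i) l)" "\<lambda>i. L (\<nu> i)"] lp by simp
  have "infsum (\<lambda>l. prod_list (map (\<phi> i) l)) (L (\<nu> i)) = (infsum (\<phi> i) N)^(\<nu> i)" for i
    using lp infsumI by blast
  then have "((\<lambda>M. \<Prod>i\<in>UNIV. prod_list (map (\<phi> i) (M i))) has_sum
     (\<Prod>i\<in>UNIV. (infsum (\<phi> i) N)^(\<nu> i))) {M\<in>J. nu M = \<nu>}"
    using pp unfolding fiber_nu by simp
  then show ?thesis by (rule has_sum_cmult_right)
qed

lemma fib_has_sum:
  assumes "infnorm y \<le> t1"
  shows "(T y has_sum (B \<nu> * (\<Prod>i\<in>UNIV. (D i y)^(\<nu> i)))) {M\<in>J. nu M = \<nu>}"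
    and "((\<lambda>M. \<bar>T y M\<bar>) has_sum (\<bar>B \<nu>\<bar> * (\<Prod>i\<in>UNIV. (S i y)^(\<nu> i)))) {M\<in>J. nu M = \<nu>}"
proof -
  have smU: "(\<lambda>m. \<bar>A i m * monom_val m y\<bar>) summable_on UNIV" for i
    using HA[OF assms] by blast
  have sm1: "(\<lambda>m. \<bar>A i m * monom_val m y\<bar>) summable_on N" for i
    by (rule summable_on_subset_banach[OF smU]) simp
  have sm2: "(\<lambda>m. \<bar>\<bar>A i m\<bar> * mono_abs m y\<bar>) summable_on N" for i
    using sm1[of i] by (simp add: abs_mult abs_monom_val mono_abs_nonneg)
  have g1: "((\<lambda>M. B \<nu> * (\<Prod>i\<in>UNIV. prod_list (map (\<lambda>m. A i m * monom_val m y) (M i)))) has_sum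
           (B \<nu> * (\<Prod>i\<in>UNIV. (D i y)^(\<nu> i)))) {M\<in>J. nu M = \<nu>}"
    unfolding D_def by (rule fib_has_sum_gen[where \<phi>="\<lambda>i m. A i m * monom_val m y"]) (rule sm1)
  have e1: "B \<nu> * (\<Prod>i\<in>UNIV. prod_list (map (\<lambda>m. A i m * monom_val m y) (M i))) = T y M" if "M \<in> {M\<in>J. nu M = \<nu>}" for M
    using that
    by (simp add: T_eq)
  show "(T y has_sum (B \<nu> * (\<Prod>i\<in>UNIV. (D i y)^(\<nu> i)))) {M\<in>J. nu M = \<nu>}"
  proof -
    have "((\<lambda>M. B \<nu> * (\<Prod>i\<in>UNIV. prod_list (map (\<lambda>m. A i m * monom_val m y) (M i)))) has_sum X) {M\<in>J. nu M = \<nu>} \<longleftrightarrow> ((T y) has_sum X) {M\<in>J. nu M = \<nu>}" for X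
      by (rule has_sum_cong) (rule e1)
    then show ?thesis using g1 by (rule iffD1)
  qed
  have g2: "((\<lambda>M. \<bar>B \<nu>\<bar> * (\<Prod>i\<in>UNIV. prod_list (map (\<lambda>m. \<bar>A i m\<bar> * mono_abs m y) (M i)))) has_sum
           (\<bar>B \<nu>\<bar> * (\<Prod>i\<in>UNIV. (S i y)^(\<nu> i)))) {M\<in>J. nu M = \<nu>}"
    unfolding S_def by (rule fib_has_sum_gen[where \<phi>="\<lambda>i m. \<bar>A i m\<bar> * mono_abs m y"]) (rule sm2)
  have e2: "\<bar>B \<nu>\<bar> * (\<Prod>i\<in>UNIV. prod_list (map (\<lambda>m. \<bar>A i m\<bar> * mono_abs m y) (M i))) = \<bar>T y M\<bar>" if "M \<in> {M\<in>J. nu M = \<nu>}" for M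
    using that
    by (simp add: absT_eq)
  show "((\<lambda>M. \<bar>T y M\<bar>) has_sum (\<bar>B \<nu>\<bar> * (\<Prod>i\<in>UNIV. (S i y)^(\<nu> i)))) {M\<in>J. nu M = \<nu>}"
  proof -
    have "((\<lambda>M. \<bar>B \<nu>\<bar> * (\<Prod>i\<in>UNIV. prod_list (map (\<lambda>m. \<bar>A i m\<bar> * mono_abs m y) (M i)))) has_sum X) {M\<in>J. nu M = \<nu>} \<longleftrightarrow> ((\<lambda>M. \<bar>T y M\<bar>) has_sum X) {M\<in>J. nu M = \<nu>}" for X
      by (rule has_sum_cong) (rule e2)
    then show ?thesis using g2 by (rule iffD1)
  qed
qed

end

context compo
begin

lemma rho_pos: "\<rho> > 0" and rho_le: "\<rho> \<le> t1" "\<rho> \<le> s1 * t1 / t2"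
  using pos unfolding \<rho>_def by auto

lemma S_nonneg: "S i y \<ge> 0"
  unfolding S_def by (intro infsum_nonneg) (simp add: mono_abs_nonneg)

lemma S_le: assumes "infnorm y \<le> t1" shows "S i y \<le> infnorm y / t1 * t2"
proof -
  have l: "0 \<le> infnorm y / t1" "infnorm y / t1 \<le> 1" using assms pos infnorm_pos_le[of y] by auto
  have "infnorm y \<le> infnorm y / t1 * t1" using pos by simp
  from type_scale(2)[where a="A i", OF HA l this pos(1)]
  show ?thesis unfolding S_def N_def .
qed

lemma S_le_s1: assumes "infnorm y \<le> \<rho>" shows "S i y \<le> s1"
proof -
  have y1: "infnorm y \<le> t1" using assms rho_le by simp
  have "S i y \<le> infnorm y / t1 * t2" by (rule S_le[OF y1])
  also have "\<dots> \<le> (s1 * t1 / t2) / t1 * t2"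
    using assms rho_le pos by (intro mult_right_mono divide_right_mono) auto
  also have "\<dots> = s1" using pos by simp
  finally show ?thesis .
qed

definition "Sv y = (\<chi> i. S i y)"

lemma Sv_prop: assumes "infnorm y \<le> \<rho>"
  shows "infnorm (Sv y) \<le> s1" "\<bar>B \<nu> * monom_val \<nu> (Sv y)\<bar> = \<bar>B \<nu>\<bar> * (\<Prod>i\<in>UNIV. (S i y)^(\<nu> i))"
    "\<bar>B \<nu>\<bar> * mono_abs \<nu> (Sv y) = \<bar>B \<nu>\<bar> * (\<Prod>i\<in>UNIV. (S i y)^(\<nu> i))"
proof -
  show "infnorm (Sv y) \<le> s1" unfolding infnorm_le_iff Sv_def using S_nonneg S_le_s1[OF assms] by simp
  show "\<bar>B \<nu> * monom_val \<nu> (Sv y)\<bar> = \<bar>B \<nu>\<bar> * (\<Prod>i\<in>UNIV. (S i y)^(\<nu> i))"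
    unfolding monom_val_def Sv_def using S_nonneg by (simp add: abs_mult abs_prod)
  show "\<bar>B \<nu>\<bar> * mono_abs \<nu> (Sv y) = \<bar>B \<nu>\<bar> * (\<Prod>i\<in>UNIV. (S i y)^(\<nu> i))"
    unfolding mono_abs_def Sv_def using S_nonneg by simp
qed

lemma absT_summable: assumes "infnorm y \<le> \<rho>" shows "(\<lambda>M. \<bar>T y M\<bar>) summable_on J"
proof -
  have y1: "infnorm y \<le> t1" using assms rho_le by simp
  have "(\<lambda>\<nu>. \<bar>B \<nu> * monom_val \<nu> (Sv y)\<bar>) summable_on UNIV"
    using HB[OF Sv_prop(1)[OF assms]] by blast
  then have "(\<lambda>\<nu>. \<bar>B \<nu>\<bar> * (\<Prod>i\<in>UNIV. (S i y)^(\<nu> i))) summable_on UNIV"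
    using Sv_prop(2)[OF assms] by simp
  then show ?thesis
    by (rule group_summable_nonneg[where p=nu and K=UNIV, rotated 3]) (use fib_has_sum(2)[OF y1] in auto)
qed

lemma high_bound: assumes "infnorm y \<le> \<rho>"
  shows "infsum (\<lambda>M. \<bar>T y M\<bar>) {M\<in>J. nu M \<in> {\<nu>. mi_order \<nu> \<ge> 1}} \<le> s2"
proof -
  let ?J' = "{M\<in>J. nu M \<in> {\<nu>. mi_order \<nu> \<ge> 1}}"
  have y1: "infnorm y \<le> t1" using assms rho_le by simp
  have sm: "(\<lambda>M. \<bar>T y M\<bar>) summable_on ?J'"
    by (rule summable_on_subset_banach[OF absT_summable[OF assms]]) auto
  have hs: "((\<lambda>\<nu>. \<bar>B \<nu>\<bar> * (\<Prod>i\<in>UNIV. (S i y)^(\<nu> i))) has_sum infsum (\<lambda>M. \<bar>T y M\<bar>) ?J') {\<nu>. mi_order \<nu> \<ge> 1}"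
  proof (rule group_has_sum[where p=nu])
    show "((\<lambda>M. \<bar>T y M\<bar>) has_sum infsum (\<lambda>M. \<bar>T y M\<bar>) ?J') ?J'" using sm by simp
    fix \<nu> :: "'n \<Rightarrow> nat" assume "\<nu> \<in> {\<nu>. mi_order \<nu> \<ge> 1}"
    then have "{M \<in> ?J'. nu M = \<nu>} = {M\<in>J. nu M = \<nu>}" by auto
    then show "((\<lambda>M. \<bar>T y M\<bar>) has_sum (\<bar>B \<nu>\<bar> * (\<Prod>i\<in>UNIV. (S i y)^(\<nu> i)))) {M \<in> ?J'. nu M = \<nu>}"
      using fib_has_sum(2)[OF y1] by simp
  qed auto
  have eqf: "(\<lambda>\<nu>. \<bar>B \<nu>\<bar> * mono_abs \<nu> (Sv y)) = (\<lambda>\<nu>. \<bar>B \<nu>\<bar> * (\<Prod>i\<in>UNIV. (S i y)^(\<nu> i)))"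
    using Sv_prop(3)[OF assms] by (rule ext)
  have "(\<Sum>\<^sub>\<infinity>\<nu>\<in>{\<nu>. mi_order \<nu> \<ge> 1}. \<bar>B \<nu>\<bar> * mono_abs \<nu> (Sv y)) = infsum (\<lambda>M. \<bar>T y M\<bar>) ?J'"
    unfolding eqf by (rule infsumI[OF hs])
  then have "infsum (\<lambda>M. \<bar>T y M\<bar>) ?J' = (\<Sum>\<^sub>\<infinity>\<nu>\<in>{\<nu>. mi_order \<nu> \<ge> 1}. \<bar>B \<nu>\<bar> * mono_abs \<nu> (Sv y))"
    by (rule sym)
  also have "\<dots> \<le> s2" using HB[OF Sv_prop(1)[OF assms]] by blast
  finally show ?thesis .
qed

lemma c_monom: "c \<mu> * monom_val \<mu> y = infsum (T y) {M\<in>J. deg M = \<mu>}"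
proof -
  have "c \<mu> * monom_val \<mu> y = infsum (\<lambda>M. K M * monom_val \<mu> y) {M\<in>J. deg M = \<mu>}"
    unfolding c_def by (simp add: infsum_cmult_left')
  also have "\<dots> = infsum (T y) {M\<in>J. deg M = \<mu>}"
    unfolding T_def by (rule infsum_cong) simp
  finally show ?thesis .
qed

lemma c_abs_le: assumes "infnorm y \<le> \<rho>"
  shows "\<bar>c \<mu> * monom_val \<mu> y\<bar> \<le> infsum (\<lambda>M. \<bar>T y M\<bar>) {M\<in>J. deg M = \<mu>}"
proof -
  have "(\<lambda>M. norm (T y M)) summable_on {M\<in>J. deg M = \<mu>}"
    using summable_on_subset_banach[OF absT_summable[OF assms]] by auto
  from norm_infsum_bound[OF this] show ?thesis unfolding c_monom by simp
qed

lemma result_bound: assumes "infnorm y \<le> \<rho>"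
  shows "(\<lambda>\<mu>. \<bar>c \<mu> * monom_val \<mu> y\<bar>) summable_on UNIV"
    and "(\<Sum>\<^sub>\<infinity>\<mu>\<in>{\<mu>. mi_order \<mu> \<ge> 1}. \<bar>c \<mu>\<bar> * mono_abs \<mu> y) \<le> s2"
proof -
  define q where "q \<mu> = infsum (\<lambda>M. \<bar>T y M\<bar>) {M\<in>J. deg M = \<mu>}" for \<mu>
  have sT: "(\<lambda>M. \<bar>T y M\<bar>) summable_on J" by (rule absT_summable[OF assms])
  have fq: "((\<lambda>M. \<bar>T y M\<bar>) has_sum q \<mu>) {M\<in>J. deg M = \<mu>}" for \<mu>
    unfolding q_def by (rule has_sum_infsum, rule summable_on_subset_banach[OF sT]) auto
  have hq: "(q has_sum infsum (\<lambda>M. \<bar>T y M\<bar>) J) UNIV"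
    by (rule group_has_sum[where p=deg]) (use sT fq in auto)
  have cle: "\<bar>c \<mu> * monom_val \<mu> y\<bar> \<le> q \<mu>" for \<mu>
    unfolding q_def by (rule c_abs_le[OF assms])
  have sq: "q summable_on UNIV" using hq summable_on_def by blast
  show sc: "(\<lambda>\<mu>. \<bar>c \<mu> * monom_val \<mu> y\<bar>) summable_on UNIV"
    by (rule summable_on_comparison_test[OF sq]) (use cle in auto)
  let ?J'' = "{M\<in>J. deg M \<in> N}"
  have sm'': "(\<lambda>M. \<bar>T y M\<bar>) summable_on ?J''"
    by (rule summable_on_subset_banach[OF sT]) auto
  have "(q has_sum infsum (\<lambda>M. \<bar>T y M\<bar>) ?J'') N"
  proof (rule group_has_sum[where p=deg])
    show "((\<lambda>M. \<bar>T y M\<bar>) has_sum infsum (\<lambda>M. \<bar>T y M\<bar>) ?J'') ?J''" using sm'' by simp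
    fix \<mu> assume "\<mu> \<in> N"
    then have "{M \<in> ?J''. deg M = \<mu>} = {M\<in>J. deg M = \<mu>}" by auto
    then show "((\<lambda>M. \<bar>T y M\<bar>) has_sum q \<mu>) {M \<in> ?J''. deg M = \<mu>}" using fq by simp
  qed auto
  then have qN: "infsum q N = infsum (\<lambda>M. \<bar>T y M\<bar>) ?J''" by (simp add: infsumI)
  have JJ: "?J'' = {M\<in>J. nu M \<in> {\<nu>. mi_order \<nu> \<ge> 1}}" using deg_N_iff by blast
  have "(\<Sum>\<^sub>\<infinity>\<mu>\<in>N. \<bar>c \<mu>\<bar> * mono_abs \<mu> y) \<le> infsum q N"
  proof (rule infsum_mono)
    show "(\<lambda>\<mu>. \<bar>c \<mu>\<bar> * mono_abs \<mu> y) summable_on N"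
      using summable_on_subset_banach[OF sc, of N] by (simp add: abs_mult abs_monom_val)
    show "q summable_on N" using summable_on_subset_banach[OF sq, of N] by simp
    fix \<mu> show "\<bar>c \<mu>\<bar> * mono_abs \<mu> y \<le> q \<mu>" using cle[of \<mu>] by (simp add: abs_mult abs_monom_val)
  qed
  also have "\<dots> \<le> s2" unfolding qN JJ by (rule high_bound[OF assms])
  finally show "(\<Sum>\<^sub>\<infinity>\<mu>\<in>{\<mu>. mi_order \<mu> \<ge> 1}. \<bar>c \<mu>\<bar> * mono_abs \<mu> y) \<le> s2" unfolding N_def .
qed

end

lemma coef0:
  assumes "((\<lambda>\<mu>. a \<mu> * monom_val \<mu> (0::real^'d::finite)) has_sum s) UNIV"
  shows "s = a (\<lambda>_. 0)"
proof -
  have "((\<lambda>\<mu>. a \<mu> * monom_val \<mu> (0::real^'d)) has_sum s) {\<lambda>_. 0}"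
    using assms by (subst (asm) has_sum_cong_neutral[where T="{\<lambda>_. 0}"]) (auto simp: monom_val_at0)
  moreover have "((\<lambda>\<mu>. a \<mu> * monom_val \<mu> (0::real^'d)) has_sum a (\<lambda>_. 0)) {\<lambda>_. 0}"
    using has_sum_finite[of "{\<lambda>_. 0}" "\<lambda>\<mu>. a \<mu> * monom_val \<mu> (0::real^'d)"] by simp
  ultimately show ?thesis using has_sum_unique by blast
qed

lemma split0:
  fixes y :: "real^'d::finite"
  assumes "((\<lambda>\<mu>. a \<mu> * monom_val \<mu> y) has_sum s) UNIV"
  shows "s = a (\<lambda>_. 0) + infsum (\<lambda>\<mu>. a \<mu> * monom_val \<mu> y) {\<mu>. mi_order \<mu> \<ge> 1}"
proof -
  have U: "UNIV = insert (\<lambda>_. 0) {\<mu>::'d\<Rightarrow>nat. mi_order \<mu> \<ge> 1}"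
    using mi_order_ge1 by auto
  have nin: "(\<lambda>_. 0) \<notin> {\<mu>::'d\<Rightarrow>nat. mi_order \<mu> \<ge> 1}" using mi_order_ge1 by auto
  have sm: "(\<lambda>\<mu>. a \<mu> * monom_val \<mu> y) summable_on {\<mu>. mi_order \<mu> \<ge> 1}"
    using assms summable_on_subset_banach summable_on_def by blast
  have "s = infsum (\<lambda>\<mu>. a \<mu> * monom_val \<mu> y) UNIV" using assms by (simp add: infsumI)
  also have "\<dots> = a (\<lambda>_. 0) * monom_val (\<lambda>_. 0) y + infsum (\<lambda>\<mu>. a \<mu> * monom_val \<mu> y) {\<mu>. mi_order \<mu> \<ge> 1}"
    by (subst U, rule infsum_insert[OF sm nin])
  finally show ?thesis by simp
qed

context compo
begin

lemma compose_series:
  assumes rA: "rA > 0" "\<And>i y. infnorm y < rA \<Longrightarrow> ((\<lambda>\<mu>. A i \<mu> * monom_val \<mu> y) has_sum FF i y) UNIV"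
    and rB: "rB > 0" "\<And>v. infnorm v < rB \<Longrightarrow> ((\<lambda>\<nu>. B \<nu> * monom_val \<nu> v) has_sum GG v) UNIV"
  shows "\<exists>r>0. \<forall>y. infnorm y < r \<longrightarrow> ((\<lambda>\<mu>. c \<mu> * monom_val \<mu> y) has_sum GG (\<chi> i. FF i y - FF i 0)) UNIV"
proof (intro exI conjI allI impI)
  define r where "r = min rA (min \<rho> (rB * t1 / t2))"
  show "r > 0" using rA rB rho_pos pos by (simp add: r_def)
  fix y :: "real^'d" assume y: "infnorm y < r"
  have yA: "infnorm y < rA" "infnorm y \<le> \<rho>" "infnorm y < rB * t1 / t2" using y r_def by auto
  have y1: "infnorm y \<le> t1" using yA rho_le by simp
  have F0: "FF i 0 = A i (\<lambda>_. 0)" for i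
    using coef0[OF rA(2)[of 0 i]] rA(1) by (simp add: infnorm_0)
  have Fy: "FF i y = A i (\<lambda>_. 0) + D i y" for i
    unfolding D_def N_def by (rule split0[OF rA(2)[OF yA(1)]])
  have Dv: "(\<chi> i. FF i y - FF i 0) = (\<chi> i. D i y)" using F0 Fy by simp
  have Dle: "\<bar>D i y\<bar> < rB" for i
  proof -
    have smU: "(\<lambda>m. \<bar>A i m * monom_val m y\<bar>) summable_on UNIV" using HA[OF y1] by blast
    have sm: "(\<lambda>m. norm (A i m * monom_val m y)) summable_on N"
      using summable_on_subset_banach[OF smU, of N] by simp
    have "\<bar>D i y\<bar> \<le> infsum (\<lambda>m. norm (A i m * monom_val m y)) N"
      unfolding D_def using norm_infsum_bound[OF sm] by simp
    also have "\<dots> = S i y" unfolding S_def by (simp add: abs_mult abs_monom_val)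
    also have "\<dots> \<le> infnorm y / t1 * t2" by (rule S_le[OF y1])
    also have "\<dots> < rB"
    proof -
      have "infnorm y / t1 < rB / t2" using yA(3) pos by (simp add: field_simps)
      then show ?thesis using pos by (simp add: field_simps)
    qed
    finally show ?thesis .
  qed
  have v: "infnorm (\<chi> i. D i y) < rB" using Dle by (simp add: infnorm_less_iff)
  have g: "((\<lambda>\<nu>. B \<nu> * (\<Prod>i\<in>UNIV. (D i y)^(\<nu> i))) has_sum GG (\<chi> i. D i y)) UNIV"
    using rB(2)[OF v] by (simp add: monom_val_def)
  have sT: "T y summable_on J"
    using absT_summable[OF yA(2)] Infinite_Sum.abs_summable_summable[of "T y" J] by simp
  have TJ: "(T y has_sum GG (\<chi> i. D i y)) J"
    by (rule ungroup_has_sum[where p=nu and K=UNIV, OF sT _ _ g]) (use fib_has_sum(1)[OF y1] in auto)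
  have "((\<lambda>\<mu>. c \<mu> * monom_val \<mu> y) has_sum GG (\<chi> i. D i y)) UNIV"
  proof (rule group_has_sum[OF TJ, where p=deg])
    fix \<mu> :: "'d \<Rightarrow> nat"
    have "T y summable_on {M\<in>J. deg M = \<mu>}" by (rule summable_on_subset_banach[OF sT]) auto
    then show "(T y has_sum c \<mu> * monom_val \<mu> y) {M\<in>J. deg M = \<mu>}"
      unfolding c_monom by simp
  qed auto
  then show "((\<lambda>\<mu>. c \<mu> * monom_val \<mu> y) has_sum GG (\<chi> i. FF i y - FF i 0)) UNIV"
    using Dv by simp
qed

end

theorem mainTheorem7:
  fixes U :: "(real^'d::finite) set" and V :: "real set"
    and f :: "real^'d \<Rightarrow> real^'n::finite" and g :: "real^'n \<Rightarrow> real"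
    and \<tau>1 \<tau>2 :: "real^'d \<Rightarrow> real" and \<sigma>1 \<sigma>2 :: "real^'n \<Rightarrow> real"
  assumes "open U" and "open V"
    and "\<forall>z\<in>U. \<forall>i. f z $ i \<in> V"
    and "\<forall>i. of_type U (\<lambda>z. f z $ i) \<tau>1 \<tau>2"
    and "of_type {y. \<forall>i. y $ i \<in> V} g \<sigma>1 \<sigma>2"
  shows "of_type U (g \<circ> f) (\<lambda>z. min (\<tau>1 z) (\<sigma>1 (f z) * \<tau>1 z / \<tau>2 z)) (\<lambda>z. \<sigma>2 (f z))"
proof -
  let ?W = "{y. \<forall>i. y $ i \<in> V}"
  have fT: "of_type U (\<lambda>z. f z $ i) \<tau>1 \<tau>2" for i using assms(4) by blast
  have gT: "of_type ?W g \<sigma>1 \<sigma>2" by (rule assms(5))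
  have fW: "f z \<in> ?W" if "z \<in> U" for z using assms(3) that by blast
  have tpos: "\<tau>1 z > 0" "\<tau>2 z > 0" if "z \<in> U" for z
    using fT[of undefined] that unfolding of_type_def by auto
  have spos: "\<sigma>1 w > 0" "\<sigma>2 w > 0" if "w \<in> ?W" for w
    using gT that unfolding of_type_def by blast+
  have main: "\<exists>c. power_series_at (g \<circ> f) z0 c \<and> (\<forall>a. power_series_at (g \<circ> f) z0 a \<longrightarrow>
      (\<forall>z. infnorm (z - z0) \<le> min (\<tau>1 z0) (\<sigma>1 (f z0) * \<tau>1 z0 / \<tau>2 z0) \<longrightarrow>
        (\<lambda>\<mu>. \<bar>a \<mu> * monom_val \<mu> (z - z0)\<bar>) summable_on UNIV \<and>
        (\<Sum>\<^sub>\<infinity>\<mu>\<in>{\<mu>. mi_order \<mu> \<ge> 1}. \<bar>a \<mu>\<bar> * mono_abs \<mu> (z - z0)) \<le> \<sigma>2 (f z0)))"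
    if z0: "z0 \<in> U" for z0
  proof -
    have "\<forall>i. \<exists>a. power_series_at (\<lambda>z. f z $ i) z0 a"
      using fT z0 unfolding of_type_def real_analytic_on_def by blast
    then obtain A where A: "\<And>i. power_series_at (\<lambda>z. f z $ i) z0 (A i)" by metis
    obtain B where B: "power_series_at g (f z0) B"
      using gT fW[OF z0] unfolding of_type_def real_analytic_on_def by blast
    have HA: "infnorm y \<le> \<tau>1 z0 \<Longrightarrow> (\<lambda>\<mu>. \<bar>A i \<mu> * monom_val \<mu> y\<bar>) summable_on UNIV \<and>
        (\<Sum>\<^sub>\<infinity>\<mu>\<in>{\<mu>. mi_order \<mu> \<ge> 1}. \<bar>A i \<mu>\<bar> * mono_abs \<mu> y) \<le> \<tau>2 z0" for i y
    proof -
      assume y: "infnorm y \<le> \<tau>1 z0"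
      have "\<forall>z. infnorm (z - z0) \<le> \<tau>1 z0 \<longrightarrow> (\<lambda>\<mu>. \<bar>A i \<mu> * monom_val \<mu> (z - z0)\<bar>) summable_on UNIV \<and>
        (\<Sum>\<^sub>\<infinity>\<mu>\<in>{\<mu>. mi_order \<mu> \<ge> 1}. \<bar>A i \<mu>\<bar> * mono_abs \<mu> (z - z0)) \<le> \<tau>2 z0"
        using fT[of i] z0 A[of i] unfolding of_type_def by blast
      from this[rule_format, of "z0 + y"] y show ?thesis by simp
    qed
    have HB: "infnorm v \<le> \<sigma>1 (f z0) \<Longrightarrow> (\<lambda>\<nu>. \<bar>B \<nu> * monom_val \<nu> v\<bar>) summable_on UNIV \<and>
        (\<Sum>\<^sub>\<infinity>\<nu>\<in>{\<nu>. mi_order \<nu> \<ge> 1}. \<bar>B \<nu>\<bar> * mono_abs \<nu> v) \<le> \<sigma>2 (f z0)" for v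
    proof -
      assume v: "infnorm v \<le> \<sigma>1 (f z0)"
      have "\<forall>w. infnorm (w - f z0) \<le> \<sigma>1 (f z0) \<longrightarrow> (\<lambda>\<nu>. \<bar>B \<nu> * monom_val \<nu> (w - f z0)\<bar>) summable_on UNIV \<and>
        (\<Sum>\<^sub>\<infinity>\<nu>\<in>{\<nu>. mi_order \<nu> \<ge> 1}. \<bar>B \<nu>\<bar> * mono_abs \<nu> (w - f z0)) \<le> \<sigma>2 (f z0)"
        using gT fW[OF z0] B unfolding of_type_def by blast
      from this[rule_format, of "f z0 + v"] v show ?thesis by simp
    qed
    interpret compo A B "\<tau>1 z0" "\<tau>2 z0" "\<sigma>1 (f z0)" "\<sigma>2 (f z0)"
      by unfold_locales (use tpos[OF z0] spos[OF fW[OF z0]] HA HB in auto)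
    have "\<forall>i. \<exists>r>0. \<forall>z. infnorm (z - z0) < r \<longrightarrow> ((\<lambda>\<mu>. A i \<mu> * monom_val \<mu> (z - z0)) has_sum f z $ i) UNIV"
      using A unfolding power_series_at_def by blast
    then obtain R where R: "\<And>i. R i > 0"
      "\<And>i z. infnorm (z - z0) < R i \<Longrightarrow> ((\<lambda>\<mu>. A i \<mu> * monom_val \<mu> (z - z0)) has_sum f z $ i) UNIV"
      by metis
    define rA where "rA = Min (range R)"
    have rA: "rA > 0" unfolding rA_def using R(1) by simp
    have rAl: "rA \<le> R i" for i unfolding rA_def by simp
    obtain rB where rB: "rB > 0"
      "\<And>w. infnorm (w - f z0) < rB \<Longrightarrow> ((\<lambda>\<nu>. B \<nu> * monom_val \<nu> (w - f z0)) has_sum g w) UNIV"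
      using B unfolding power_series_at_def by blast
    have "\<exists>r>0. \<forall>y. infnorm y < r \<longrightarrow> ((\<lambda>\<mu>. c \<mu> * monom_val \<mu> y) has_sum
        (\<lambda>v. g (f z0 + v)) (\<chi> i. (\<lambda>i y. f (z0 + y) $ i) i y - (\<lambda>i y. f (z0 + y) $ i) i 0)) UNIV"
    proof (rule compose_series[OF rA _ rB(1)])
      fix i and y :: "real^'d" assume "infnorm y < rA"
      then have "infnorm ((z0 + y) - z0) < R i" using rAl[of i] by simp
      from R(2)[OF this] show "((\<lambda>\<mu>. A i \<mu> * monom_val \<mu> y) has_sum f (z0 + y) $ i) UNIV" by simp
    next
      fix v :: "real^'n" assume "infnorm v < rB"
      then have "infnorm ((f z0 + v) - f z0) < rB" by simp
      from rB(2)[OF this] show "((\<lambda>\<nu>. B \<nu> * monom_val \<nu> v) has_sum g (f z0 + v)) UNIV" by simp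
    qed
    moreover have "f z0 + (\<chi> i. f (z0 + y) $ i - f (z0 + 0) $ i) = f (z0 + y)" for y
      by (simp add: vec_eq_iff)
    ultimately obtain r where r: "r > 0"
      "\<And>y. infnorm y < r \<Longrightarrow> ((\<lambda>\<mu>. c \<mu> * monom_val \<mu> y) has_sum g (f (z0 + y))) UNIV"
      by auto
    have ps: "power_series_at (g \<circ> f) z0 c"
      unfolding power_series_at_def
    proof (intro exI conjI allI impI)
      show "r > 0" by (rule r(1))
      fix z assume "infnorm (z - z0) < r"
      from r(2)[OF this] show "((\<lambda>\<mu>. c \<mu> * monom_val \<mu> (z - z0)) has_sum (g \<circ> f) z) UNIV" by simp
    qed
    show ?thesis
    proof (intro exI conjI allI impI)
      show "power_series_at (g \<circ> f) z0 c" by (rule ps)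
      fix a z assume a: "power_series_at (g \<circ> f) z0 a"
        and z: "infnorm (z - z0) \<le> min (\<tau>1 z0) (\<sigma>1 (f z0) * \<tau>1 z0 / \<tau>2 z0)"
      have ac: "a = c" by (rule power_series_unique[OF a ps])
      have zr: "infnorm (z - z0) \<le> \<rho>" using z unfolding \<rho>_def .
      show "(\<lambda>\<mu>. \<bar>a \<mu> * monom_val \<mu> (z - z0)\<bar>) summable_on UNIV"
        unfolding ac by (rule result_bound(1)[OF zr])
      show "(\<Sum>\<^sub>\<infinity>\<mu>\<in>{\<mu>. mi_order \<mu> \<ge> 1}. \<bar>a \<mu>\<bar> * mono_abs \<mu> (z - z0)) \<le> \<sigma>2 (f z0)"
        unfolding ac by (rule result_bound(2)[OF zr])
    qed
  qed
  have p1: "\<forall>z\<in>U. 0 < min (\<tau>1 z) (\<sigma>1 (f z) * \<tau>1 z / \<tau>2 z) \<and> 0 < \<sigma>2 (f z)"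
    using tpos spos fW by simp
  have p2: "\<forall>z\<in>U. \<exists>a. power_series_at (g \<circ> f) z a" using main by blast
  have p3: "\<forall>z0\<in>U. \<forall>a. power_series_at (g \<circ> f) z0 a \<longrightarrow>
      (\<forall>z. infnorm (z - z0) \<le> min (\<tau>1 z0) (\<sigma>1 (f z0) * \<tau>1 z0 / \<tau>2 z0) \<longrightarrow>
        (\<lambda>\<mu>. \<bar>a \<mu> * monom_val \<mu> (z - z0)\<bar>) summable_on UNIV \<and>
        (\<Sum>\<^sub>\<infinity>\<mu>\<in>{\<mu>. mi_order \<mu> \<ge> 1}. \<bar>a \<mu>\<bar> * mono_abs \<mu> (z - z0)) \<le> \<sigma>2 (f z0))"
    using main by blast
  show ?thesis
    unfolding of_type_def real_analytic_on_def using p1 p2 p3 by blast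
qed

end
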